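(* Let $(Q_t)_{t\ge0}$ be the semigroup of the Bessel-3 process, i.e. for $x>0$, $t>0$ and measurable $f$, $$Q_t f(x) = \int_0^\infty f(y)\,\frac{2}{\sqrt{2\pi t}}\,\frac{y}{x}\sinh\!\Big(\frac{xy}{t}\Big)e^{-\frac{x^2+y^2}{2t}}\,dy,$$ and for a probability measure $\mu$ on $(0,+\infty)$ write $\mu Q_t f := \int_{(0,\infty)} Q_t f(x)\,\mu(dx)$. Let $\gamma(dx) = x^2\,dx$ on $\mathbb{R}_+$ and $K_t := \frac{t\sqrt{2\pi t}}{2}$. Let $f$ be a measurable function such that $$C_f := \frac12\int_{\mathbb{R}_+}|f(x)|x^2\,dx<\infty \quad\text{and}\quad C'_f := \frac12\int_{\mathbb{R}_+}|f(x)|x^4\,dx<\infty.$$ Then for any $t>0$ and any probability measure $\mu$ supported on $(0,+\infty)$ with $\int_0^\infty x^2\mu(dx)<+\infty$, $$|\gamma(f) - K_t\,\mu Q_t f| \le \frac{C_f\int_0^\infty x^2\mu(dx) + C'_f}{t}.$$ If moreover $f$ is positive, then $$t\,\big(\gamma(f) - K_t\,\mu Q_t f\big) \xrightarrow[t\to\infty]{} \int_0^\infty\int_0^\infty f(y)\,\frac{y^2(x^2+y^2)}{2}\,dy\,\mu(dx).$$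
   Context: The Bessel-3 process is the diffusion $dY_t = dB_t + \frac{1}{Y_t}dt$; the displayed formula is the density of its transition kernel. *)

theory Defs
  imports "HOL-Probability.Probability"
begin

definition bessel3_density :: "real \<Rightarrow> real \<Rightarrow> real \<Rightarrow> real" where
  "bessel3_density t x y =
     2 / sqrt (2 * pi * t) * (y / x) * sinh (x * y / t) * exp (- (x\<^sup>2 + y\<^sup>2) / (2 * t))"

definition bessel3_Q :: "real \<Rightarrow> (real \<Rightarrow> real) \<Rightarrow> real \<Rightarrow> real" where
  "bessel3_Q t f x = (LBINT y:{0<..}. f y * bessel3_density t x y)"

definition mu_Q :: "real measure \<Rightarrow> real \<Rightarrow> (real \<Rightarrow> real) \<Rightarrow> real" where
  "mu_Q \<mu> t f = (\<integral>x. bessel3_Q t f x \<partial>\<mu>)"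

definition gamma_meas :: "(real \<Rightarrow> real) \<Rightarrow> real" where
  "gamma_meas f = (LBINT x:{0..}. f x * x\<^sup>2)"

definition K_const :: "real \<Rightarrow> real" where
  "K_const t = t * sqrt (2 * pi * t) / 2"

end

theory Submission imports Defs "HOL-Real_Asymp.Real_Asymp" begin

definition hh :: "real \<Rightarrow> real \<Rightarrow> real \<Rightarrow> real" where
  "hh t x y = t / (x * y) * sinh (x * y / t) * exp (- (x\<^sup>2 + y\<^sup>2) / (2 * t))"

lemma sinh_meas [measurable]: "(sinh :: real \<Rightarrow> real) \<in> borel_measurable borel"
  by (intro borel_measurable_continuous_onI continuous_intros)

lemma lim_aux1: "(c::real) > 0 \<Longrightarrow> ((\<lambda>t. t * (t / c * sinh (c / t) - 1)) \<longlongrightarrow> 0) at_top"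
  unfolding sinh_field_def by real_asymp

lemma lim_aux2: "(b::real) > 0 \<Longrightarrow> ((\<lambda>t. t * (1 - exp (- b / t))) \<longlongrightarrow> b) at_top"
  by real_asymp

lemma lim_aux3: "((\<lambda>t::real. exp (- b / t)) \<longlongrightarrow> 1) at_top"
proof -
  have "((\<lambda>t::real. - b / t) \<longlongrightarrow> 0) at_top" by real_asymp
  from tendsto_exp[OF this] show ?thesis by simp
qed

lemma hh_lim:
  assumes "x > 0" "y > 0"
  shows "((\<lambda>t. t * (1 - hh t x y)) \<longlongrightarrow> (x\<^sup>2 + y\<^sup>2)/2) at_top"
proof -
  define c where "c = x * y"
  define b where "b = (x\<^sup>2 + y\<^sup>2) / 2"
  have c: "c > 0" using assms by (simp add: c_def)
  have b: "b > 0" using assms unfolding b_def by (intro divide_pos_pos add_pos_pos) auto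
  have eq: "t * (1 - hh t x y) = t * (1 - exp (- b / t)) - exp (- b / t) * (t * (t / c * sinh (c / t) - 1))"
    if "t > 0" for t
    unfolding hh_def c_def b_def using that
    by (simp add: field_simps)
  have "((\<lambda>t. t * (1 - exp (- b / t)) - exp (- b / t) * (t * (t / c * sinh (c / t) - 1))) \<longlongrightarrow> b - 1 * 0) at_top"
    by (intro tendsto_intros lim_aux1 lim_aux2 lim_aux3 b c)
  hence lim: "((\<lambda>t. t * (1 - exp (- b / t)) - exp (- b / t) * (t * (t / c * sinh (c / t) - 1))) \<longlongrightarrow> b) at_top"
    by simp
  have ev: "eventually (\<lambda>t. t * (1 - exp (- b / t)) - exp (- b / t) * (t * (t / c * sinh (c / t) - 1)) = t * (1 - hh t x y)) at_top"
    using eventually_gt_at_top[of 0] by (rule eventually_mono) (simp add: eq)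
  have "((\<lambda>t. t * (1 - hh t x y)) \<longlongrightarrow> b) at_top"
    by (rule Lim_transform_eventually[OF lim ev])
  thus ?thesis by (simp add: b_def)
qed

lemma sinh_ge: "0 \<le> (a::real) \<Longrightarrow> a \<le> sinh a"
  using real_le_x_sinh[of a] by (simp add: sinh_field_def exp_minus)

lemma sinh_le: "0 \<le> (a::real) \<Longrightarrow> sinh a \<le> a * exp a"
proof -
  assume a: "0 \<le> a"
  have "1 - 2*a \<le> exp (-2*a)" using exp_ge_add_one_self[of "-2*a"] by simp
  hence "exp a * (1 - 2*a) \<le> exp a * exp (-2*a)" by (rule mult_left_mono) auto
  also have "exp a * exp (-2*a) = exp (-a)" by (simp add: exp_add[symmetric])
  finally have "exp a - exp (-a) \<le> 2 * a * exp a" by (simp add: algebra_simps)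
  thus ?thesis by (simp add: sinh_field_def)
qed

lemma hh_bounds:
  assumes "x > 0" "y > 0" "t > 0"
  shows "0 \<le> hh t x y \<and> 0 \<le> 1 - hh t x y \<and> 1 - hh t x y \<le> (x\<^sup>2 + y\<^sup>2)/(2*t)"
proof -
  define a where "a = x*y/t"
  define b where "b = (x\<^sup>2 + y\<^sup>2)/(2*t)"
  have a: "a > 0" using assms by (simp add: a_def)
  have "2*x*y \<le> x\<^sup>2 + y\<^sup>2" by (rule sum_squares_bound)
  hence "x*y/t \<le> ((x\<^sup>2 + y\<^sup>2)/2)/t" using assms by (intro divide_right_mono) auto
  hence ab: "a \<le> b" unfolding a_def b_def by simp
  have h: "hh t x y = (sinh a / a) * exp (-b)"
    unfolding hh_def a_def b_def using assms by (simp add: field_simps)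
  have s1: "1 \<le> sinh a / a" using sinh_ge[of a] a by simp
  have s2: "sinh a / a \<le> exp a" using sinh_le[of a] a by (simp add: divide_simps mult.commute)
  have "hh t x y \<le> exp a * exp (-b)" unfolding h by (intro mult_right_mono s2) auto
  also have "\<dots> = exp (a - b)" by (simp add: exp_diff exp_minus field_simps)
  also have "\<dots> \<le> 1" using ab by simp
  finally have u: "hh t x y \<le> 1" .
  have "1 - b \<le> exp (-b)" using exp_ge_add_one_self[of "-b"] by simp
  also have "\<dots> \<le> hh t x y" unfolding h using mult_right_mono[OF s1, of "exp (-b)"] by simp
  moreover have "0 \<le> hh t x y" unfolding h using a by simp
  ultimately show ?thesis using u by (simp add: b_def)
qed

lemma dens_eq:
  assumes "x > 0" "y > 0" "t > 0"
  shows "K_const t * bessel3_density t x y = y\<^sup>2 * hh t x y"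
proof -
  have "sqrt (2 * pi * t) > 0" using assms by simp
  thus ?thesis unfolding K_const_def bessel3_density_def hh_def using assms
    by (simp add: field_simps power2_eq_square)
qed

lemma sint_bound:
  fixes S :: "real set" and h G :: "real \<Rightarrow> real"
  assumes "set_integrable lborel S G" "h \<in> borel_measurable borel" "S \<in> sets borel"
    "\<And>y. y \<in> S \<Longrightarrow> \<bar>h y\<bar> \<le> G y"
  shows "set_integrable lborel S h"
  unfolding set_integrable_def
proof (rule Bochner_Integration.integrable_bound[where f="\<lambda>y. indicator S y *\<^sub>R G y"])
  show "integrable lborel (\<lambda>y. indicator S y *\<^sub>R G y)" using assms(1) by (simp add: set_integrable_def)
  show "(\<lambda>y. indicator S y *\<^sub>R h y) \<in> borel_measurable lborel" using assms(2,3) by measurable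
  show "AE y in lborel. norm (indicator S y *\<^sub>R h y) \<le> norm (indicator S y *\<^sub>R G y)"
    using assms(4) by (auto split: split_indicator intro: order_trans[OF _ abs_ge_self])
qed

lemma sint_abs_le:
  fixes S :: "real set" and h G :: "real \<Rightarrow> real"
  assumes "set_integrable lborel S G" "h \<in> borel_measurable borel" "S \<in> sets borel"
    "\<And>y. y \<in> S \<Longrightarrow> \<bar>h y\<bar> \<le> G y"
  shows "\<bar>LBINT y:S. h y\<bar> \<le> (LBINT y:S. G y)"
proof -
  have hi: "set_integrable lborel S h" by (rule sint_bound[OF assms])
  show ?thesis unfolding set_lebesgue_integral_def
    apply (rule order_trans[OF Bochner_Integration.integral_abs_bound Bochner_Integration.integral_mono])
    using hi assms(1,4) by (auto simp: set_integrable_def split: split_indicator)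
qed

lemma hh_meas [measurable]: "(\<lambda>y. hh t x y) \<in> borel_measurable borel"
  unfolding hh_def by measurable

lemma S_conv:
  fixes g :: "real \<Rightarrow> real"
  assumes [measurable]: "g \<in> borel_measurable borel"
  shows "(LBINT x:{0..}. g x) = (LBINT x:{0<..}. g x)"
proof (rule set_integral_cong_set)
  show "set_borel_measurable lborel {0<..} g" unfolding set_borel_measurable_def by measurable
  show "set_borel_measurable lborel {0..} g" unfolding set_borel_measurable_def by measurable
  show "AE x in lborel. ((x::real) \<in> {0<..}) = (x \<in> {0..})"
  proof -
    have "AE x in lborel. (x::real) \<noteq> 0" by (rule AE_lborel_singleton)
    then show ?thesis by eventually_elim auto
  qed
qed

lemma sint_nonneg:
  fixes g :: "real \<Rightarrow> real"
  assumes "\<And>x. 0 \<le> g x"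
  shows "0 \<le> (LBINT x:S. g x)"
  unfolding set_lebesgue_integral_def
  by (rule Bochner_Integration.integral_nonneg_AE) (use assms in \<open>auto split: split_indicator\<close>)

theorem lemma3p2:
  fixes f :: "real \<Rightarrow> real" and \<mu> :: "real measure"
  assumes f_meas: "f \<in> borel_measurable borel"
    and Cf_fin: "(\<integral>\<^sup>+x\<in>{0..}. ennreal (\<bar>f x\<bar> * x\<^sup>2) \<partial>lborel) < \<infinity>"
    and Cf'_fin: "(\<integral>\<^sup>+x\<in>{0..}. ennreal (\<bar>f x\<bar> * x ^ 4) \<partial>lborel) < \<infinity>"
    and mu_prob: "prob_space \<mu>"
    and mu_sets: "sets \<mu> = sets borel"
    and mu_supp: "emeasure \<mu> {0<..} = 1"
    and mu_mom: "integrable \<mu> (\<lambda>x. x\<^sup>2)"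
  shows "(\<forall>t>0. \<bar>gamma_meas f - K_const t * mu_Q \<mu> t f\<bar>
            \<le> ((1/2) * (LBINT x:{0..}. \<bar>f x\<bar> * x\<^sup>2) * (\<integral>x. x\<^sup>2 \<partial>\<mu>)
               + (1/2) * (LBINT x:{0..}. \<bar>f x\<bar> * x ^ 4)) / t)
       \<and> ((\<forall>x. 0 \<le> f x) \<longrightarrow>
          ((\<lambda>t. t * (gamma_meas f - K_const t * mu_Q \<mu> t f))
             \<longlongrightarrow> (\<integral>x. (LBINT y:{0..}. f y * (y\<^sup>2 * (x\<^sup>2 + y\<^sup>2) / 2)) \<partial>\<mu>)) at_top)"
proof -
  define S where "S = ({0<..} :: real set)"
  have S_sets [measurable]: "S \<in> sets borel" by (simp add: S_def)
  define A where "A = (LBINT x:{0..}. \<bar>f x\<bar> * x\<^sup>2)"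
  define B where "B = (LBINT x:{0..}. \<bar>f x\<bar> * x ^ 4)"
  define M2 where "M2 = (\<integral>x. x\<^sup>2 \<partial>\<mu>)"
  interpret P: prob_space \<mu> by (rule mu_prob)
  note [measurable] = f_meas
  have intA0: "set_integrable lborel {0..} (\<lambda>x. \<bar>f x\<bar> * x\<^sup>2)"
    unfolding set_integrable_def
  proof (rule integrableI_bounded)
    show "(\<lambda>x. indicator {0..} x *\<^sub>R (\<bar>f x\<bar> * x\<^sup>2)) \<in> borel_measurable lborel" by measurable
    have "(\<integral>\<^sup>+x. ennreal (norm (indicator {0..} x *\<^sub>R (\<bar>f x\<bar> * x\<^sup>2))) \<partial>lborel)
        = (\<integral>\<^sup>+x\<in>{0..}. ennreal (\<bar>f x\<bar> * x\<^sup>2) \<partial>lborel)"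
      by (intro nn_integral_cong) (auto split: split_indicator)
    thus "(\<integral>\<^sup>+x. ennreal (norm (indicator {0..} x *\<^sub>R (\<bar>f x\<bar> * x\<^sup>2))) \<partial>lborel) < \<infinity>"
      using Cf_fin by simp
  qed
  have intB0: "set_integrable lborel {0..} (\<lambda>x. \<bar>f x\<bar> * x ^ 4)"
    unfolding set_integrable_def
  proof (rule integrableI_bounded)
    show "(\<lambda>x. indicator {0..} x *\<^sub>R (\<bar>f x\<bar> * x ^ 4)) \<in> borel_measurable lborel" by measurable
    have "(\<integral>\<^sup>+x. ennreal (norm (indicator {0..} x *\<^sub>R (\<bar>f x\<bar> * x ^ 4))) \<partial>lborel)
        = (\<integral>\<^sup>+x\<in>{0..}. ennreal (\<bar>f x\<bar> * x ^ 4) \<partial>lborel)"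
      by (intro nn_integral_cong) (auto split: split_indicator)
    thus "(\<integral>\<^sup>+x. ennreal (norm (indicator {0..} x *\<^sub>R (\<bar>f x\<bar> * x ^ 4))) \<partial>lborel) < \<infinity>"
      using Cf'_fin by simp
  qed
  have intA: "set_integrable lborel S (\<lambda>x. \<bar>f x\<bar> * x\<^sup>2)"
    by (rule set_integrable_subset[OF intA0]) (auto simp: S_def)
  have intB: "set_integrable lborel S (\<lambda>x. \<bar>f x\<bar> * x ^ 4)"
    by (rule set_integrable_subset[OF intB0]) (auto simp: S_def)
  have A_S: "A = (LBINT x:S. \<bar>f x\<bar> * x\<^sup>2)" unfolding A_def S_def by (rule S_conv) measurable
  have B_S: "B = (LBINT x:S. \<bar>f x\<bar> * x ^ 4)" unfolding B_def S_def by (rule S_conv) measurable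
  have A0: "0 \<le> A" unfolding A_def by (rule sint_nonneg) simp
  have B0: "0 \<le> B" unfolding B_def by (rule sint_nonneg) simp
  have intA': "set_integrable lborel S (\<lambda>y. c * (\<bar>f y\<bar> * y\<^sup>2))" for c
    using integrable_mult_right[OF intA[unfolded set_integrable_def], of c]
    by (simp add: set_integrable_def mult.left_commute)
  have intB': "set_integrable lborel S (\<lambda>y. c * (\<bar>f y\<bar> * y ^ 4))" for c
    using integrable_mult_right[OF intB[unfolded set_integrable_def], of c]
    by (simp add: set_integrable_def mult.left_commute)
  have Kpos: "K_const t > 0" if "t > 0" for t
    using that by (simp add: K_const_def)

  have key: "gamma_meas f - K_const t * bessel3_Q t f x = (LBINT y:S. f y * y\<^sup>2 * (1 - hh t x y))
      \<and> \<bar>K_const t * bessel3_Q t f x\<bar> \<le> A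
      \<and> \<bar>gamma_meas f - K_const t * bessel3_Q t f x\<bar> \<le> (x\<^sup>2 * A + B) / (2 * t)"
    if t: "t > 0" and x: "x > 0" for t x
  proof -
    have hb: "0 \<le> hh t x y \<and> 0 \<le> 1 - hh t x y \<and> 1 - hh t x y \<le> (x\<^sup>2 + y\<^sup>2)/(2*t)" if "y \<in> S" for y
      using hh_bounds[OF x _ t] that by (auto simp: S_def)
    have i1: "set_integrable lborel S (\<lambda>y. f y * y\<^sup>2)"
      by (rule sint_bound[OF intA]) (auto simp: abs_mult)
    have i2: "set_integrable lborel S (\<lambda>y. f y * y\<^sup>2 * hh t x y)"
    proof (rule sint_bound[OF intA])
      fix y assume y: "y \<in> S"
      have "\<bar>f y * y\<^sup>2 * hh t x y\<bar> = \<bar>f y\<bar> * y\<^sup>2 * hh t x y" using hb[OF y] by (simp add: abs_mult)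
      also have "\<dots> \<le> \<bar>f y\<bar> * y\<^sup>2 * 1" using hb[OF y] by (intro mult_left_mono) auto
      finally show "\<bar>f y * y\<^sup>2 * hh t x y\<bar> \<le> \<bar>f y\<bar> * y\<^sup>2" by simp
    qed auto
    have "K_const t * bessel3_Q t f x = (LBINT y:S. K_const t * (f y * bessel3_density t x y))"
      unfolding bessel3_Q_def S_def by simp
    also have "\<dots> = (LBINT y:S. f y * y\<^sup>2 * hh t x y)"
      by (intro set_lebesgue_integral_cong) (use dens_eq[OF x _ t] in \<open>auto simp: S_def\<close>)
    finally have eqK: "K_const t * bessel3_Q t f x = (LBINT y:S. f y * y\<^sup>2 * hh t x y)" .
    have eqG: "gamma_meas f = (LBINT y:S. f y * y\<^sup>2)"
      unfolding gamma_meas_def S_def by (rule S_conv) measurable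
    have "gamma_meas f - K_const t * bessel3_Q t f x = (LBINT y:S. f y * y\<^sup>2 - f y * y\<^sup>2 * hh t x y)"
      unfolding eqK eqG by (rule set_integral_diff(2)[OF i1 i2, symmetric])
    also have "\<dots> = (LBINT y:S. f y * y\<^sup>2 * (1 - hh t x y))"
      by (intro set_lebesgue_integral_cong) (auto simp: algebra_simps)
    finally have eqD: "gamma_meas f - K_const t * bessel3_Q t f x = (LBINT y:S. f y * y\<^sup>2 * (1 - hh t x y))" .
    have absK: "\<bar>K_const t * bessel3_Q t f x\<bar> \<le> A"
      unfolding eqK A_S
    proof (rule sint_abs_le[OF intA])
      fix y assume y: "y \<in> S"
      have "\<bar>f y * y\<^sup>2 * hh t x y\<bar> = \<bar>f y\<bar> * y\<^sup>2 * hh t x y" using hb[OF y] by (simp add: abs_mult)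
      also have "\<dots> \<le> \<bar>f y\<bar> * y\<^sup>2 * 1" using hb[OF y] by (intro mult_left_mono) auto
      finally show "\<bar>f y * y\<^sup>2 * hh t x y\<bar> \<le> \<bar>f y\<bar> * y\<^sup>2" by simp
    qed auto
    define G where "G y = (x\<^sup>2 / (2*t)) * (\<bar>f y\<bar> * y\<^sup>2) + (1 / (2*t)) * (\<bar>f y\<bar> * y ^ 4)" for y
    have iG: "set_integrable lborel S G"
      unfolding G_def by (intro set_integral_add(1) set_integrable_mult_right intA intB)
    have intG: "(LBINT y:S. G y) = (x\<^sup>2 * A + B) / (2 * t)"
      unfolding G_def A_S B_S
      by (simp only: set_integral_add(2)[OF intA' intB'] set_integral_mult_right) (simp add: add_divide_distrib)
    have "\<bar>LBINT y:S. f y * y\<^sup>2 * (1 - hh t x y)\<bar> \<le> (LBINT y:S. G y)"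
    proof (rule sint_abs_le[OF iG])
      fix y assume y: "y \<in> S"
      have "\<bar>f y * y\<^sup>2 * (1 - hh t x y)\<bar> = \<bar>f y\<bar> * y\<^sup>2 * (1 - hh t x y)" using hb[OF y] by (simp add: abs_mult)
      also have "\<dots> \<le> \<bar>f y\<bar> * y\<^sup>2 * ((x\<^sup>2 + y\<^sup>2)/(2*t))" using hb[OF y] by (intro mult_left_mono) auto
      also have "\<dots> = G y" unfolding G_def by (simp add: field_simps power2_eq_square eval_nat_numeral, simp add: add_divide_distrib)
      finally show "\<bar>f y * y\<^sup>2 * (1 - hh t x y)\<bar> \<le> G y" .
    qed auto
    with eqD absK intG show ?thesis by simp
  qed

  have Qm: "(\<lambda>x. bessel3_Q t f x) \<in> borel_measurable borel" for t
    unfolding bessel3_Q_def set_lebesgue_integral_def bessel3_density_def by measurable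
  have Qmu [measurable]: "(\<lambda>x. bessel3_Q t f x) \<in> borel_measurable \<mu>" for t
    by (subst measurable_cong_sets[OF mu_sets refl]) (rule Qm)
  have "measure \<mu> S = 1" using mu_supp by (simp add: measure_def S_def)
  hence "AE x in \<mu>. x \<in> S" by (rule P.AE_prob_1)
  hence AEpos: "AE x in \<mu>. x > 0" by (rule eventually_mono) (simp add: S_def)

  have intQ: "integrable \<mu> (\<lambda>x. bessel3_Q t f x)" if t: "t > 0" for t
  proof (rule Bochner_Integration.integrable_bound[where f="\<lambda>x. A / K_const t"])
    show "integrable \<mu> (\<lambda>x. A / K_const t)" by simp
    show "(\<lambda>x. bessel3_Q t f x) \<in> borel_measurable \<mu>" by measurable
    show "AE x in \<mu>. norm (bessel3_Q t f x) \<le> norm (A / K_const t)"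
      using AEpos
    proof eventually_elim
      case (elim x)
      have "K_const t * \<bar>bessel3_Q t f x\<bar> \<le> A"
        using key[OF t elim] Kpos[OF t] by (simp add: abs_mult)
      thus ?case using Kpos[OF t] A0 by (simp add: pos_le_divide_eq mult.commute)
    qed
  qed
  have int_eq: "gamma_meas f - K_const t * mu_Q \<mu> t f = (\<integral>x. gamma_meas f - K_const t * bessel3_Q t f x \<partial>\<mu>)"
    if t: "t > 0" for t
  proof -
    have "(\<integral>x. gamma_meas f - K_const t * bessel3_Q t f x \<partial>\<mu>)
        = (\<integral>x. gamma_meas f \<partial>\<mu>) - (\<integral>x. K_const t * bessel3_Q t f x \<partial>\<mu>)"
      by (rule Bochner_Integration.integral_diff) (auto intro: intQ[OF t])
    thus ?thesis unfolding mu_Q_def by (simp add: P.prob_space)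
  qed
  have intE: "integrable \<mu> (\<lambda>x. gamma_meas f - K_const t * bessel3_Q t f x)" if t: "t > 0" for t
    using intQ[OF t] by auto

  have part1: "\<bar>gamma_meas f - K_const t * mu_Q \<mu> t f\<bar>
            \<le> ((1/2) * A * M2 + (1/2) * B) / t" if t: "t > 0" for t
  proof -
    define w where "w x = (A / (2*t)) * x\<^sup>2 + B / (2*t)" for x :: real
    have iw: "integrable \<mu> w" unfolding w_def using mu_mom by auto
    have Iw: "(\<integral>x. w x \<partial>\<mu>) = (A / (2*t)) * M2 + B / (2*t)"
    proof -
      have "(\<integral>x. A / (2*t) * x\<^sup>2 + B / (2*t) \<partial>\<mu>) = (\<integral>x. A / (2*t) * x\<^sup>2 \<partial>\<mu>) + (\<integral>x. B / (2*t) \<partial>\<mu>)"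
        by (rule Bochner_Integration.integral_add) (use mu_mom in auto)
      thus ?thesis unfolding w_def M2_def by (simp add: P.prob_space)
    qed
    have "\<bar>gamma_meas f - K_const t * mu_Q \<mu> t f\<bar> \<le> (\<integral>x. \<bar>gamma_meas f - K_const t * bessel3_Q t f x\<bar> \<partial>\<mu>)"
      unfolding int_eq[OF t] by (rule Bochner_Integration.integral_abs_bound)
    also have "\<dots> \<le> (\<integral>x. w x \<partial>\<mu>)"
    proof (rule integral_mono_AE'[OF iw])
      show "AE x in \<mu>. \<bar>gamma_meas f - K_const t * bessel3_Q t f x\<bar> \<le> w x"
        using AEpos
      proof eventually_elim
        case (elim x)
        have eq: "(x\<^sup>2 * A + B) / (2 * t) = w x" unfolding w_def using t by (simp add: field_simps)
        show ?case using conjunct2[OF conjunct2[OF key[OF t elim]]] by (simp only: eq)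
      qed
      show "AE x in \<mu>. 0 \<le> w x" unfolding w_def using A0 B0 t by auto
    qed
    also have "\<dots> = ((1/2) * A * M2 + (1/2) * B) / t" unfolding Iw using t by (simp add: field_simps)
    finally show ?thesis .
  qed

  define F where "F x = (LBINT y:{0..}. f y * (y\<^sup>2 * (x\<^sup>2 + y\<^sup>2) / 2))" for x
  have part2: "((\<lambda>t. t * (gamma_meas f - K_const t * mu_Q \<mu> t f)) \<longlongrightarrow> (\<integral>x. F x \<partial>\<mu>)) at_top"
  proof -
    define w where "w x = (A / 2) * x\<^sup>2 + B / 2" for x :: real
    have iw: "integrable \<mu> w" unfolding w_def using mu_mom by auto
    have Fm: "F \<in> borel_measurable \<mu>"
    proof -
      have "F \<in> borel_measurable borel"
        unfolding F_def[abs_def] set_lebesgue_integral_def by measurable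
      thus ?thesis by (subst measurable_cong_sets[OF mu_sets refl])
    qed
    have sm: "(\<lambda>x. t * (gamma_meas f - K_const t * bessel3_Q t f x)) \<in> borel_measurable \<mu>" for t
      by measurable
    have lim: "AE x in \<mu>. ((\<lambda>t. t * (gamma_meas f - K_const t * bessel3_Q t f x)) \<longlongrightarrow> F x) at_top"
      using AEpos
    proof eventually_elim
      case (elim x)
      note x = elim
      define G where "G y = (x\<^sup>2 / 2) * (\<bar>f y\<bar> * y\<^sup>2) + (1 / 2) * (\<bar>f y\<bar> * y ^ 4)" for y
      have iG: "set_integrable lborel S G"
        unfolding G_def by (intro set_integral_add(1) set_integrable_mult_right intA intB)
      have ev: "eventually (\<lambda>t. (LBINT y:S. f y * y\<^sup>2 * (t * (1 - hh t x y)))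
                 = t * (gamma_meas f - K_const t * bessel3_Q t f x)) at_top"
        using eventually_gt_at_top[of 0]
      proof (rule eventually_mono)
        fix t :: real assume t: "t > 0"
        have "t * (gamma_meas f - K_const t * bessel3_Q t f x) = (LBINT y:S. t * (f y * y\<^sup>2 * (1 - hh t x y)))"
          using key[OF t x] by simp
        also have "\<dots> = (LBINT y:S. f y * y\<^sup>2 * (t * (1 - hh t x y)))"
          by (intro set_lebesgue_integral_cong) (auto simp: algebra_simps)
        finally show "(LBINT y:S. f y * y\<^sup>2 * (t * (1 - hh t x y)))
                 = t * (gamma_meas f - K_const t * bessel3_Q t f x)" by simp
      qed
      have "((\<lambda>t. LBINT y:S. f y * y\<^sup>2 * (t * (1 - hh t x y))) \<longlongrightarrow> (LBINT y:S. f y * y\<^sup>2 * ((x\<^sup>2 + y\<^sup>2)/2))) at_top"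
        unfolding set_lebesgue_integral_def
      proof (rule integral_dominated_convergence_at_top[where w="\<lambda>y. indicator S y *\<^sub>R G y"])
        show "(\<lambda>y. indicator S y *\<^sub>R (f y * y\<^sup>2 * ((x\<^sup>2 + y\<^sup>2) / 2))) \<in> borel_measurable lborel"
          by measurable
        show "(\<lambda>y. indicator S y *\<^sub>R (f y * y\<^sup>2 * (t * (1 - hh t x y)))) \<in> borel_measurable lborel" for t
          by measurable
        show "integrable lborel (\<lambda>y. indicator S y *\<^sub>R G y)" using iG by (simp add: set_integrable_def)
        show "AE y in lborel. ((\<lambda>t. indicator S y *\<^sub>R (f y * y\<^sup>2 * (t * (1 - hh t x y))))
                \<longlongrightarrow> indicator S y *\<^sub>R (f y * y\<^sup>2 * ((x\<^sup>2 + y\<^sup>2) / 2))) at_top"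
        proof (rule AE_I2)
          fix y
          show "((\<lambda>t. indicator S y *\<^sub>R (f y * y\<^sup>2 * (t * (1 - hh t x y))))
                \<longlongrightarrow> indicator S y *\<^sub>R (f y * y\<^sup>2 * ((x\<^sup>2 + y\<^sup>2) / 2))) at_top"
          proof (cases "y \<in> S")
            case True
            hence "y > 0" by (simp add: S_def)
            from tendsto_mult_left[OF hh_lim[OF x this], of "f y * y\<^sup>2"] True show ?thesis by simp
          qed simp
        qed
        show "\<forall>\<^sub>F t in at_top. AE y in lborel. norm (indicator S y *\<^sub>R (f y * y\<^sup>2 * (t * (1 - hh t x y)))) \<le> indicator S y *\<^sub>R G y"
          using eventually_gt_at_top[of 0]
        proof (rule eventually_mono)
          fix t :: real assume t: "t > 0"
          show "AE y in lborel. norm (indicator S y *\<^sub>R (f y * y\<^sup>2 * (t * (1 - hh t x y)))) \<le> indicator S y *\<^sub>R G y"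
          proof (rule AE_I2)
            fix y
            show "norm (indicator S y *\<^sub>R (f y * y\<^sup>2 * (t * (1 - hh t x y)))) \<le> indicator S y *\<^sub>R G y"
            proof (cases "y \<in> S")
              case True
              hence y: "y > 0" by (simp add: S_def)
              note hb = hh_bounds[OF x y t]
              have tb: "t * (1 - hh t x y) \<le> (x\<^sup>2 + y\<^sup>2)/2"
                using mult_left_mono[OF conjunct2[OF conjunct2[OF hb]], of t] t by simp
              have "\<bar>f y * y\<^sup>2 * (t * (1 - hh t x y))\<bar> = \<bar>f y\<bar> * y\<^sup>2 * (t * (1 - hh t x y))"
                using hb t by (simp add: abs_mult)
              also have "\<dots> \<le> \<bar>f y\<bar> * y\<^sup>2 * ((x\<^sup>2 + y\<^sup>2)/2)" using tb by (intro mult_left_mono) auto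
              also have "\<dots> = G y" unfolding G_def by (simp add: field_simps power2_eq_square eval_nat_numeral)
              finally show ?thesis using True by simp
            qed simp
          qed
        qed
      qed
      moreover have "(LBINT y:S. f y * y\<^sup>2 * ((x\<^sup>2 + y\<^sup>2)/2)) = F x"
      proof -
        have "F x = (LBINT y:S. f y * (y\<^sup>2 * (x\<^sup>2 + y\<^sup>2) / 2))"
          unfolding F_def S_def by (rule S_conv) measurable
        also have "\<dots> = (LBINT y:S. f y * y\<^sup>2 * ((x\<^sup>2 + y\<^sup>2)/2))"
          by (intro set_lebesgue_integral_cong) auto
        finally show ?thesis by simp
      qed
      ultimately have "((\<lambda>t. LBINT y:S. f y * y\<^sup>2 * (t * (1 - hh t x y))) \<longlongrightarrow> F x) at_top" by simp
      thus ?case by (rule Lim_transform_eventually[OF _ ev])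
    qed
    have bound: "\<forall>\<^sub>F t in at_top. AE x in \<mu>. norm (t * (gamma_meas f - K_const t * bessel3_Q t f x)) \<le> w x"
      using eventually_gt_at_top[of 0]
    proof (rule eventually_mono)
      fix t :: real assume t: "t > 0"
      show "AE x in \<mu>. norm (t * (gamma_meas f - K_const t * bessel3_Q t f x)) \<le> w x"
        using AEpos
      proof eventually_elim
        case (elim x)
        have "\<bar>gamma_meas f - K_const t * bessel3_Q t f x\<bar> \<le> (x\<^sup>2 * A + B) / (2 * t)"
          by (rule conjunct2[OF conjunct2[OF key[OF t elim]]])
        hence "t * \<bar>gamma_meas f - K_const t * bessel3_Q t f x\<bar> \<le> t * ((x\<^sup>2 * A + B) / (2 * t))"
          using t by (intro mult_left_mono) auto
        also have "\<dots> = w x" unfolding w_def using t by (simp add: field_simps)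
        finally show ?case using t by (simp add: abs_mult)
      qed
    qed
    have L: "((\<lambda>t. \<integral>x. t * (gamma_meas f - K_const t * bessel3_Q t f x) \<partial>\<mu>) \<longlongrightarrow> (\<integral>x. F x \<partial>\<mu>)) at_top"
      by (rule integral_dominated_convergence_at_top[OF Fm sm iw lim bound])
    have ev2: "eventually (\<lambda>t. (\<integral>x. t * (gamma_meas f - K_const t * bessel3_Q t f x) \<partial>\<mu>)
               = t * (gamma_meas f - K_const t * mu_Q \<mu> t f)) at_top"
      using eventually_gt_at_top[of 0]
      by (rule eventually_mono) (simp add: int_eq)
    show ?thesis by (rule Lim_transform_eventually[OF L ev2])
  qed
  show ?thesis
    using part1 part2 unfolding A_def B_def M2_def F_def by auto
qed

end
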